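(* For every $R>0$ there exists $\eta>0$ such that for every $\delta\in\mathcal{V}_R$ satisfying $\sup\{|\delta(x)|: x\in\mathcal{K}_1\}<\eta$, the point $0$ is the unique equilibrium point of the vector field $F_{\lambda+\delta}$ lying in $\mathcal{K}_1$.
   Context: Let $n\ge1$, $A,B\in\mathrm{End}(\mathbb{R}^n)$, $b\in\mathbb{R}^n$, $A_u=A+uB$. For $\mu:\mathbb{R}^n\to\mathbb{R}$, $F_\mu$ is the vector field $F_\mu(x)=A_{\mu(x)}x+b\mu(x)$ on $\mathbb{R}^n$. Let $\lambda\in C^\infty(\mathbb{R}^n,\mathbb{R})$ with $\lambda(0)=0$ be such that $0$ is an asymptotically stable equilibrium of $F_\lambda$ with open domain of attraction $D(\lambda)$. Let $\mathcal{K}_1$ be a (semi-algebraic) compact subset of $D(\lambda)$. For $R>0$, $\mathcal{V}_R=\{\delta\in C^\infty(\mathbb{R}^n,\mathbb{R}):\delta(x)=0\ \forall x\in B(0,R)\}$. *)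

theory Defs
  imports "HOL-Analysis.Analysis"
begin

fun pderivs :: "'n::finite list \<Rightarrow> (real^'n \<Rightarrow> real) \<Rightarrow> real^'n \<Rightarrow> real" where
  "pderivs [] f = f"
| "pderivs (i # is) f = (\<lambda>x. deriv (\<lambda>t. pderivs is f (x + t *\<^sub>R axis i 1)) 0)"

definition smooth_fun :: "(real^'n::finite \<Rightarrow> real) \<Rightarrow> bool" where
  "smooth_fun f \<longleftrightarrow>
     (\<forall>is. continuous_on UNIV (pderivs is f) \<and>
        (\<forall>i x. (\<lambda>t. pderivs is f (x + t *\<^sub>R axis i 1)) differentiable (at 0)))"

inductive_set polyfun :: "(real^'n::finite \<Rightarrow> real) set" where
  const: "(\<lambda>x. c) \<in> polyfun"
| coord: "(\<lambda>x. x $ i) \<in> polyfun"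
| add: "p \<in> polyfun \<Longrightarrow> q \<in> polyfun \<Longrightarrow> (\<lambda>x. p x + q x) \<in> polyfun"
| mult: "p \<in> polyfun \<Longrightarrow> q \<in> polyfun \<Longrightarrow> (\<lambda>x. p x * q x) \<in> polyfun"

text \<open>Finite union of basic sets {p = 0, q_1 > 0, ..., q_k > 0} (standard normal form).\<close>
definition semialgebraic :: "(real^'n::finite) set \<Rightarrow> bool" where
  "semialgebraic S \<longleftrightarrow>
     (\<exists>L :: ((real^'n \<Rightarrow> real) \<times> (real^'n \<Rightarrow> real) list) list.
        (\<forall>(p, qs) \<in> set L. p \<in> polyfun \<and> set qs \<subseteq> polyfun) \<and>
        S = (\<Union>(p, qs) \<in> set L. {x. p x = 0 \<and> (\<forall>q \<in> set qs. q x > 0)}))"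

definition Fmu :: "real^'n^'n \<Rightarrow> real^'n^'n \<Rightarrow> real^'n \<Rightarrow> (real^'n \<Rightarrow> real)
                    \<Rightarrow> real^'n \<Rightarrow> real^'n" where
  "Fmu A B b \<mu> x = (A + \<mu> x *\<^sub>R B) *v x + \<mu> x *\<^sub>R b"

definition sol_upto :: "('a::real_normed_vector \<Rightarrow> 'a) \<Rightarrow> (real \<Rightarrow> 'a) \<Rightarrow> real \<Rightarrow> bool" where
  "sol_upto F x T \<longleftrightarrow>
     (\<forall>t\<in>{0..<T}. (x has_vector_derivative F (x t)) (at t within {0..<T}))"

definition fwd_solution :: "('a::real_normed_vector \<Rightarrow> 'a) \<Rightarrow> (real \<Rightarrow> 'a) \<Rightarrow> bool" where
  "fwd_solution F x \<longleftrightarrow>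
     (\<forall>t\<ge>0. (x has_vector_derivative F (x t)) (at t within {0..}))"

definition lyapunov_stable0 :: "('a::real_normed_vector \<Rightarrow> 'a) \<Rightarrow> bool" where
  "lyapunov_stable0 F \<longleftrightarrow>
     (\<forall>\<epsilon>>0. \<exists>d>0. \<forall>x T. sol_upto F x T \<and> norm (x 0) < d \<longrightarrow>
        (\<forall>t\<in>{0..<T}. norm (x t) < \<epsilon>))"

definition domain_of_attraction :: "('a::real_normed_vector \<Rightarrow> 'a) \<Rightarrow> 'a set" where
  "domain_of_attraction F =
     {x0. \<exists>x. fwd_solution F x \<and> x 0 = x0 \<and> (x \<longlongrightarrow> 0) at_top}"

definition asymptotically_stable0 :: "('a::real_normed_vector \<Rightarrow> 'a) \<Rightarrow> bool" where
  "asymptotically_stable0 F \<longleftrightarrow>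
     F 0 = 0 \<and> lyapunov_stable0 F \<and> 0 \<in> interior (domain_of_attraction F)"

end

theory Submission
  imports Defs
begin


lemma onorm_vd: "onorm (\<lambda>h::real. h *\<^sub>R (v::'a::real_normed_vector)) = norm v"
  using onorm_scaleR_left[of "\<lambda>x. x" v] by (simp add: onorm_id bounded_linear_ident)

lemma local_step:
  fixes F :: "'a::real_normed_vector \<Rightarrow> 'a"
  assumes sol: "fwd_solution F x" and t0: "t0 \<ge> 0" and xt0: "x t0 = x0"
    and r: "r > 0" and L: "L > 0" and FL: "\<And>y. y \<in> ball x0 r \<Longrightarrow> norm (F y) \<le> L * norm (y - x0)"
  shows "\<exists>\<tau>>0. \<forall>t\<in>{t0..t0+\<tau>}. x t = x0"
proof -
  have cont: "continuous_on {0..} x"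
    using sol unfolding fwd_solution_def
    by (metis atLeast_iff continuous_on_eq_continuous_within has_vector_derivative_continuous)
  then have "continuous (at t0 within {0..}) x" using t0
    by (simp add: continuous_on_eq_continuous_within)
  then obtain d where d: "d > 0" "\<And>t. t \<in> {0..} \<Longrightarrow> dist t t0 < d \<Longrightarrow> dist (x t) (x t0) < r"
    using r unfolding continuous_within_eps_delta by blast
  define \<tau> where "\<tau> = min (d/2) (1/(2*L))"
  have tau: "\<tau> > 0" "\<tau> < d" "L * \<tau> \<le> 1/2" using d L
    by (auto simp: \<tau>_def min_def field_simps)
  define I where "I = {t0..t0+\<tau>}"
  have IS: "I \<subseteq> {0..}" using t0 by (auto simp: I_def)
  have inball: "x t \<in> ball x0 r" if "t \<in> I" for t
    using d(2)[of t] that IS tau xt0 by (auto simp: I_def dist_real_def dist_commute)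
  have contI: "continuous_on I (\<lambda>t. norm (x t - x0))"
    by (intro continuous_intros continuous_on_subset[OF cont IS])
  obtain s where s: "s \<in> I" "\<And>t. t \<in> I \<Longrightarrow> norm (x t - x0) \<le> norm (x s - x0)"
    using continuous_attains_sup[OF _ _ contI] tau unfolding I_def by fastforce
  define M where "M = norm (x s - x0)"
  have bnd: "norm (x t - x0) \<le> (L * M) * norm (t - t0)" if "t \<in> I" for t
  proof -
    have "norm (x t - x t0) \<le> (L * M) * norm (t - t0)"
    proof (rule differentiable_bound[where S=I and f'="\<lambda>u h. h *\<^sub>R F (x u)"])
      show "convex I" by (simp add: I_def)
      fix u assume u: "u \<in> I"
      have "(x has_vector_derivative F (x u)) (at u within {0..})"
        using sol u IS unfolding fwd_solution_def by auto
      then have "(x has_vector_derivative F (x u)) (at u within I)"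
        using has_vector_derivative_within_subset IS by blast
      then show "(x has_derivative (\<lambda>h. h *\<^sub>R F (x u))) (at u within I)"
        by (simp add: has_vector_derivative_def)
      have "norm (F (x u)) \<le> L * norm (x u - x0)" using FL inball u by blast
      also have "\<dots> \<le> L * M" using s(2)[OF u] L by (simp add: M_def)
      finally show "onorm (\<lambda>h. h *\<^sub>R F (x u)) \<le> L * M" by (simp add: onorm_vd)
    qed (use that in \<open>auto simp: I_def\<close>)
    then show ?thesis using xt0 by simp
  qed
  have "M \<le> (L*M) * norm (s - t0)" using bnd[OF s(1)] by (simp add: M_def)
  also have "\<dots> \<le> (L*M) * \<tau>" using s(1) L by (intro mult_left_mono) (auto simp: I_def M_def)
  also have "\<dots> \<le> M/2" using tau(3) M_def
    by (metis mult.assoc mult.commute mult_left_mono norm_ge_zero times_divide_eq_right mult_1_right)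
  finally have "M \<le> 0" by simp
  then have "\<forall>t\<in>I. x t = x0" using s(2) unfolding M_def by (metis eq_iff_diff_eq_0 norm_le_zero_iff order_trans)
  then show ?thesis using tau I_def by blast
qed

lemma equilibrium_const:
  fixes F :: "'a::real_normed_vector \<Rightarrow> 'a"
  assumes sol: "fwd_solution F x" and x0: "x 0 = x0"
    and r: "r > 0" and L: "L > 0" and FL: "\<And>y. y \<in> ball x0 r \<Longrightarrow> norm (F y) \<le> L * norm (y - x0)"
  shows "\<forall>t\<ge>0. x t = x0"
proof (rule ccontr)
  assume "\<not> (\<forall>t\<ge>0. x t = x0)"
  then have Nne: "{t. t \<ge> 0 \<and> x t \<noteq> x0} \<noteq> {}" by auto
  define N where "N = {t. t \<ge> 0 \<and> x t \<noteq> x0}"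
  define s where "s = Inf N"
  have bdd: "bdd_below N" unfolding N_def by (rule bdd_belowI[of _ 0]) auto
  have s0: "s \<ge> 0" unfolding s_def using Nne by (intro cInf_greatest) (auto simp: N_def)
  have below: "x t = x0" if "t \<ge> 0" "t < s" for t
  proof (rule ccontr)
    assume "x t \<noteq> x0" then have "t \<in> N" using that by (auto simp: N_def)
    then have "s \<le> t" unfolding s_def using bdd by (rule cInf_lower)
    then show False using that by simp
  qed
  have cont: "continuous_on {0..} x"
    using sol unfolding fwd_solution_def
    by (metis atLeast_iff continuous_on_eq_continuous_within has_vector_derivative_continuous)
  show False
  proof (cases "x s = x0")
    case True
    obtain \<tau> where tau: "\<tau> > 0" "\<forall>t\<in>{s..s+\<tau>}. x t = x0"
      using local_step[OF sol s0 True r L FL] by blast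
    have "s + \<tau> \<le> Inf N"
    proof (rule cInf_greatest)
      show "N \<noteq> {}" using Nne N_def by simp
      fix t assume t: "t \<in> N"
      have st1: "s \<le> t" unfolding s_def using t bdd by (rule cInf_lower)
      have st2: "x t \<noteq> x0" using t by (simp add: N_def)
      note st = st1 st2
      show "s + \<tau> \<le> t"
      proof (rule ccontr)
        assume "\<not> s + \<tau> \<le> t"
        then have "t \<in> {s..s+\<tau>}" using st by simp
        then show False using tau(2) st by blast
      qed
    qed
    then show False using tau by (simp add: s_def)
  next
    case False
    have spos: "s > 0"
    proof (rule ccontr)
      assume "\<not> s > 0" then have "s = 0" using s0 by simp
      then show False using False x0 by simp
    qed
    have "continuous (at s within {0..}) x" using cont s0
      by (simp add: continuous_on_eq_continuous_within)
    then obtain d where d: "d > 0" "\<And>t. t \<in> {0..} \<Longrightarrow> dist t s < d \<Longrightarrow> dist (x t) (x s) < dist x0 (x s)"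
      using False unfolding continuous_within_eps_delta by (metis dist_pos_lt)
    define t where "t = max 0 (s - d/2)"
    have "t \<ge> 0" "t < s" "dist t s < d" using spos d by (auto simp: t_def dist_real_def)
    then show False using d(2)[of t] below[of t] by auto
  qed
qed

lemma equilibrium_in_doa:
  fixes F :: "'a::real_normed_vector \<Rightarrow> 'a"
  assumes "x0 \<in> domain_of_attraction F"
    and r: "r > 0" and L: "L > 0" and FL: "\<And>y. y \<in> ball x0 r \<Longrightarrow> norm (F y) \<le> L * norm (y - x0)"
  shows "x0 = 0"
proof -
  obtain x where x: "fwd_solution F x" "x 0 = x0" "(x \<longlongrightarrow> 0) at_top"
    using assms(1) unfolding domain_of_attraction_def by blast
  have c: "\<forall>t\<ge>0. x t = x0" using equilibrium_const[OF x(1,2) r L FL] .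
  have e: "\<forall>\<^sub>F t in at_top. t \<ge> (0::real)" by (rule eventually_ge_at_top)
  have ev: "\<forall>\<^sub>F t in at_top. x t = x0" by (rule eventually_mono[OF e]) (use c in auto)
  have "((\<lambda>t::real. x0) \<longlongrightarrow> 0) at_top" using x(3) tendsto_cong[OF ev] by blast
  from tendsto_unique[OF _ this tendsto_const] show ?thesis by simp
qed



lemma partial_deriv:
  assumes "smooth_fun f"
  shows "((\<lambda>t. f (z + t *\<^sub>R axis i 1)) has_real_derivative pderivs [i] f (z + t *\<^sub>R axis i 1)) (at t)"
proof -
  let ?g = "\<lambda>s. f ((z + t *\<^sub>R axis i 1) + s *\<^sub>R axis i 1)"
  have "?g differentiable (at 0)"
    using assms unfolding smooth_fun_def by (metis pderivs.simps(1))
  then have "(?g has_real_derivative deriv ?g 0) (at 0)"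
    using DERIV_deriv_iff_real_differentiable by blast
  then have d: "(?g has_real_derivative pderivs [i] f (z + t *\<^sub>R axis i 1)) (at 0)" by simp
  have eq: "?g = (\<lambda>s. (\<lambda>t. f (z + t *\<^sub>R axis i 1)) (s + t))"
    by (rule ext) (simp add: scaleR_add_left algebra_simps)
  show ?thesis using d unfolding eq using DERIV_shift[of "\<lambda>t. f (z + t *\<^sub>R axis i 1)" _ 0 t] by simp
qed

lemma axis_step:
  fixes f :: "real^'n \<Rightarrow> real"
  assumes sm: "smooth_fun f" and z: "z \<in> cbox lo hi" and zh: "z + h *\<^sub>R axis i 1 \<in> cbox lo hi"
    and M: "\<And>y. y \<in> cbox lo hi \<Longrightarrow> \<bar>pderivs [i] f y\<bar> \<le> M"
  shows "\<bar>f (z + h *\<^sub>R axis i 1) - f z\<bar> \<le> M * \<bar>h\<bar>"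
proof -
  let ?S = "closed_segment 0 h"
  let ?g = "\<lambda>t. f (z + t *\<^sub>R axis i 1)"
  have inQ: "z + t *\<^sub>R axis i 1 \<in> cbox lo hi" if tS: "t \<in> ?S" for t
  proof -
    obtain u where u: "t = (1 - u) *\<^sub>R 0 + u *\<^sub>R h" "0 \<le> u" "u \<le> 1"
      using tS unfolding closed_segment_def by blast
    have "z + t *\<^sub>R axis i 1 = (1 - u) *\<^sub>R z + u *\<^sub>R (z + h *\<^sub>R axis i 1)"
      using u(1) by (simp add: algebra_simps)
    then have "z + t *\<^sub>R axis i 1 \<in> closed_segment z (z + h *\<^sub>R axis i 1)"
      using u(2,3) unfolding closed_segment_def by blast
    then show ?thesis using closed_segment_subset[OF z zh] convex_box(1) by blast
  qed
  have "norm (?g h - ?g 0) \<le> M * norm (h - 0)"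
  proof (rule differentiable_bound[where S="?S" and f'="\<lambda>t u. pderivs [i] f (z + t *\<^sub>R axis i 1) * u"])
    fix t assume t: "t \<in> ?S"
    show "(?g has_derivative (\<lambda>u. pderivs [i] f (z + t *\<^sub>R axis i 1) * u)) (at t within ?S)"
      using partial_deriv[OF sm, of z i t] has_field_derivative_imp_has_derivative
        has_derivative_at_withinI by blast
    show "onorm (\<lambda>u. pderivs [i] f (z + t *\<^sub>R axis i 1) * u) \<le> M"
    proof (rule onorm_bound)
      show "0 \<le> M" using M[OF inQ[OF t]] by simp
      fix u :: real
      show "norm (pderivs [i] f (z + t *\<^sub>R axis i 1) * u) \<le> M * norm u"
        using M[OF inQ[OF t]] by (simp add: abs_mult mult_right_mono)
    qed
  qed auto
  then show ?thesis by simp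
qed

lemma coord_induct:
  fixes f :: "real^'n \<Rightarrow> real"
  assumes sm: "smooth_fun f"
    and M: "\<And>i y. y \<in> cbox lo hi \<Longrightarrow> \<bar>pderivs [i] f y\<bar> \<le> M"
  shows "finite S \<Longrightarrow> \<forall>z w. z \<in> cbox lo hi \<longrightarrow> w \<in> cbox lo hi \<longrightarrow> (\<forall>j. j \<notin> S \<longrightarrow> z $ j = w $ j)
      \<longrightarrow> \<bar>f z - f w\<bar> \<le> M * (\<Sum>j\<in>S. \<bar>z $ j - w $ j\<bar>)"
proof (induction S rule: finite_induct)
  case empty
  show ?case
  proof (intro allI impI)
    fix z w :: "real^'n" assume "\<forall>j. j \<notin> {} \<longrightarrow> z $ j = w $ j"
    then have "z = w" by (simp add: vec_eq_iff)
    then show "\<bar>f z - f w\<bar> \<le> M * (\<Sum>j\<in>{}. \<bar>z $ j - w $ j\<bar>)" by simp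
  qed
next
  case (insert i S)
  show ?case
  proof (intro allI impI)
    fix z w assume z: "z \<in> cbox lo hi" and w: "w \<in> cbox lo hi" and d: "\<forall>j. j \<notin> insert i S \<longrightarrow> z $ j = w $ j"
    define z' where "z' = z + (w $ i - z $ i) *\<^sub>R axis i 1"
    have z'c: "z' $ j = (if j = i then w $ i else z $ j)" for j
      by (simp add: z'_def axis_def)
    have z'Q: "z' \<in> cbox lo hi" using z w unfolding mem_box_cart z'c by auto
    have s1: "\<bar>f z' - f z\<bar> \<le> M * \<bar>w $ i - z $ i\<bar>"
    proof -
      have zq: "z + (w $ i - z $ i) *\<^sub>R axis i 1 \<in> cbox lo hi" using z'Q by (simp only: z'_def)
      show ?thesis using axis_step[OF sm z zq M] unfolding z'_def .
    qed
    have s2: "\<bar>f z' - f w\<bar> \<le> M * (\<Sum>j\<in>S. \<bar>z' $ j - w $ j\<bar>)"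
    proof -
      have dd: "\<forall>j. j \<notin> S \<longrightarrow> z' $ j = w $ j" using d by (simp add: z'c)
      show ?thesis using insert.IH z'Q w dd by blast
    qed
    have "(\<Sum>j\<in>S. \<bar>z' $ j - w $ j\<bar>) = (\<Sum>j\<in>S. \<bar>z $ j - w $ j\<bar>)"
      using insert.hyps(2) by (intro sum.cong) (auto simp: z'c)
    then have "\<bar>f z - f w\<bar> \<le> M * \<bar>z $ i - w $ i\<bar> + M * (\<Sum>j\<in>S. \<bar>z $ j - w $ j\<bar>)"
      using s1 s2 by (simp add: abs_minus_commute)
    also have "\<dots> = M * (\<Sum>j\<in>insert i S. \<bar>z $ j - w $ j\<bar>)"
      using insert.hyps by (simp add: distrib_left)
    finally show "\<bar>f z - f w\<bar> \<le> M * (\<Sum>j\<in>insert i S. \<bar>z $ j - w $ j\<bar>)" .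
  qed
qed

lemma lip_at:
  fixes f :: "real^'n \<Rightarrow> real"
  assumes sm: "smooth_fun f"
  shows "\<exists>C\<ge>0. \<forall>y\<in>ball x0 1. \<bar>f y - f x0\<bar> \<le> C * norm (y - x0)"
proof -
  define Q where "Q = cbox (x0 - vec 1) (x0 + vec 1)"
  define h where "h = (\<lambda>x. \<Sum>i\<in>UNIV. \<bar>pderivs [i] f x\<bar>)"
  have ci: "continuous_on Q (pderivs [i] f)" for i
    using sm unfolding smooth_fun_def by (meson continuous_on_subset subset_UNIV)
  have "continuous_on Q h" unfolding h_def
    by (intro continuous_on_sum continuous_on_rabs ci)
  then have "compact (h ` Q)" unfolding Q_def by (intro compact_continuous_image) auto
  then have "bounded (h ` Q)" by (rule compact_imp_bounded)
  then obtain M where MM: "\<forall>v\<in>h ` Q. \<bar>v\<bar> \<le> M" unfolding bounded_real by blast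
  have M0: "\<bar>h x\<bar> \<le> M" if "x \<in> Q" for x using MM that by blast
  have M: "\<bar>pderivs [i] f y\<bar> \<le> M" if "y \<in> Q" for i y
  proof -
    have "\<bar>pderivs [i] f y\<bar> \<le> h y" unfolding h_def
      by (rule member_le_sum[where f="\<lambda>i. \<bar>pderivs [i] f y\<bar>"]) simp_all
    then show ?thesis using M0[OF that] by simp
  qed
  have x0Q: "x0 \<in> Q" unfolding Q_def mem_box_cart by simp
  have M0': "M \<ge> 0" using M[OF x0Q] abs_ge_zero order_trans by blast
  have key: "\<bar>f z - f w\<bar> \<le> M * (\<Sum>j\<in>UNIV. \<bar>z $ j - w $ j\<bar>)" if "z \<in> Q" "w \<in> Q" for z w
  proof -
    have M': "\<And>i y. y \<in> cbox (x0 - vec 1) (x0 + vec 1) \<Longrightarrow> \<bar>pderivs [i] f y\<bar> \<le> M"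
      using M unfolding Q_def by blast
    have "\<forall>z w. z \<in> cbox (x0 - vec 1) (x0 + vec 1) \<longrightarrow> w \<in> cbox (x0 - vec 1) (x0 + vec 1)
      \<longrightarrow> (\<forall>j. j \<notin> (UNIV::'n set) \<longrightarrow> z $ j = w $ j)
      \<longrightarrow> \<bar>f z - f w\<bar> \<le> M * (\<Sum>j\<in>UNIV. \<bar>z $ j - w $ j\<bar>)"
      using coord_induct[OF sm M', where S=UNIV] by simp
    then show ?thesis using that unfolding Q_def by blast
  qed
  show ?thesis
  proof (intro exI[of _ "M * CARD('n)"] conjI ballI)
    show "0 \<le> M * CARD('n)" using M0' by simp
    fix y assume y: "y \<in> ball x0 1"
    have yQ: "y \<in> Q" unfolding Q_def mem_box_cart
    proof
      fix i
      have "\<bar>(y - x0) $ i\<bar> \<le> norm (y - x0)" by (rule component_le_norm_cart)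
      also have "\<dots> < 1" using y by (simp add: dist_norm norm_minus_commute)
      finally show "(x0 - vec 1) $ i \<le> y $ i \<and> y $ i \<le> (x0 + vec 1) $ i" by auto
    qed
    have "(\<Sum>j\<in>UNIV. \<bar>y $ j - x0 $ j\<bar>) \<le> (\<Sum>j\<in>(UNIV::'n set). norm (y - x0))"
    proof (intro sum_mono)
      fix j
      show "\<bar>y $ j - x0 $ j\<bar> \<le> norm (y - x0)" using component_le_norm_cart[of "y - x0" j] by simp
    qed
    also have "\<dots> = CARD('n) * norm (y - x0)" by simp
    finally have "M * (\<Sum>j\<in>UNIV. \<bar>y $ j - x0 $ j\<bar>) \<le> M * (CARD('n) * norm (y - x0))"
      using M0' by (rule mult_left_mono)
    then show "\<bar>f y - f x0\<bar> \<le> M * CARD('n) * norm (y - x0)"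
      using key[OF yQ x0Q] by (simp add: mult.assoc)
  qed
qed



lemma Fmu_alt: "Fmu A B b mu x = A *v x + mu x *\<^sub>R (B *v x + b)"
  unfolding Fmu_def by (simp add: matrix_vector_mult_add_rdistrib scaleR_matrix_vector_assoc[symmetric] scaleR_add_right)

lemma cont_mv: "continuous_on S (\<lambda>x. (A::real^'n^'m) *v x)"
  by (intro linear_continuous_on linear_conv_bounded_linear[THEN iffD1] matrix_vector_mul_linear)

lemma F_bound:
  fixes A B :: "real^'n^'n" and b :: "real^'n"
  assumes sm: "smooth_fun lam" and eq: "Fmu A B b lam x0 = 0"
  shows "\<exists>L>0. \<forall>y\<in>ball x0 1. norm (Fmu A B b lam y) \<le> L * norm (y - x0)"
proof -
  obtain C where C: "C \<ge> 0" "\<And>y. y\<in>ball x0 1 \<Longrightarrow> \<bar>lam y - lam x0\<bar> \<le> C * norm (y - x0)"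
    using lip_at[OF sm, of x0] by blast
  obtain KA where KA: "KA > 0" "\<And>x. norm (A *v x) \<le> KA * norm x"
    using linear_bounded_pos[OF matrix_vector_mul_linear[of A]] by blast
  obtain KB where KB: "KB > 0" "\<And>x. norm (B *v x) \<le> KB * norm x"
    using linear_bounded_pos[OF matrix_vector_mul_linear[of B]] by blast
  define L where "L = KA + C * (KB * (norm x0 + 1) + norm b) + \<bar>lam x0\<bar> * KB + 1"
  have L0: "L > 0" unfolding L_def using KA KB C by (simp add: add_pos_nonneg)
  show ?thesis
  proof (intro exI[of _ L] conjI ballI L0)
    fix y assume y: "y \<in> ball x0 1"
    define d where "d = y - x0"
    have nd: "norm d < 1" using y by (simp add: d_def dist_norm norm_minus_commute)
    have ident: "Fmu A B b lam y = A *v d + (lam y - lam x0) *\<^sub>R (B *v y + b) + lam x0 *\<^sub>R (B *v d)"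
    proof -
      have "Fmu A B b lam y = Fmu A B b lam y - Fmu A B b lam x0" using eq by simp
      also have "\<dots> = A *v d + (lam y - lam x0) *\<^sub>R (B *v y + b) + lam x0 *\<^sub>R (B *v d)"
        unfolding Fmu_alt d_def by (simp add: algebra_simps)
      finally show ?thesis .
    qed
    have ny: "norm y \<le> norm x0 + 1"
    proof -
      have "norm y = norm (x0 + d)" by (simp add: d_def)
      also have "\<dots> \<le> norm x0 + norm d" by (rule norm_triangle_ineq)
      finally show ?thesis using nd by simp
    qed
    have q: "norm (B *v y + b) \<le> KB * (norm x0 + 1) + norm b"
    proof -
      have "norm (B *v y + b) \<le> norm (B *v y) + norm b" by (rule norm_triangle_ineq)
      also have "\<dots> \<le> KB * norm y + norm b" using KB(2)[of y] by simp
      also have "\<dots> \<le> KB * (norm x0 + 1) + norm b" using ny KB(1) by simp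
      finally show ?thesis .
    qed
    have t2: "norm ((lam y - lam x0) *\<^sub>R (B *v y + b)) \<le> (C * norm d) * (KB * (norm x0 + 1) + norm b)"
      unfolding norm_scaleR using C(2)[OF y] q unfolding d_def
      by (intro mult_mono) auto
    have t3: "norm (lam x0 *\<^sub>R (B *v d)) \<le> \<bar>lam x0\<bar> * (KB * norm d)"
      unfolding norm_scaleR using KB(2)[of d] by (intro mult_left_mono) auto
    have "norm (Fmu A B b lam y) \<le> norm (A *v d) + norm ((lam y - lam x0) *\<^sub>R (B *v y + b)) + norm (lam x0 *\<^sub>R (B *v d))"
      unfolding ident by (meson norm_triangle_ineq order_trans add_right_mono)
    also have "\<dots> \<le> KA * norm d + (C * norm d) * (KB * (norm x0 + 1) + norm b) + \<bar>lam x0\<bar> * (KB * norm d)"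
      using KA(2)[of d] t2 t3 by linarith
    also have "\<dots> \<le> L * norm d" unfolding L_def by (simp add: algebra_simps)
    finally show "norm (Fmu A B b lam y) \<le> L * norm (y - x0)" by (simp add: d_def)
  qed
qed

lemma eq_zero:
  fixes A B :: "real^'n^'n" and b :: "real^'n"
  assumes sm: "smooth_fun lam" and eq: "Fmu A B b lam x0 = 0"
    and doa: "x0 \<in> domain_of_attraction (Fmu A B b lam)"
  shows "x0 = 0"
proof -
  obtain L where "L > 0" "\<forall>y\<in>ball x0 1. norm (Fmu A B b lam y) \<le> L * norm (y - x0)"
    using F_bound[OF sm eq] by blast
  then show ?thesis using equilibrium_in_doa[OF doa, of 1 L] by simp
qed



theorem lemma4:
  fixes A B :: "real^'n^'n" and b :: "real^'n"
    and lam :: "real^'n \<Rightarrow> real" and K1 :: "(real^'n) set"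
  assumes "smooth_fun lam" and "lam 0 = 0"
    and "asymptotically_stable0 (Fmu A B b lam)"
    and "open (domain_of_attraction (Fmu A B b lam))"
    and "compact K1" and "semialgebraic K1"
    and "K1 \<subseteq> domain_of_attraction (Fmu A B b lam)"
    and "R > 0"
  shows "\<exists>\<eta>>0. \<forall>\<delta>. smooth_fun \<delta> \<and> (\<forall>x\<in>ball 0 R. \<delta> x = 0)
            \<and> (SUP x\<in>K1. \<bar>\<delta> x\<bar>) < \<eta> \<longrightarrow>
            (\<forall>x\<in>K1. Fmu A B b (\<lambda>x. lam x + \<delta> x) x = 0 \<longrightarrow> x = 0)"
proof -
  note sm = assms(1) and K1c = assms(5) and K1D = assms(7) and R = assms(8)
  have eq0: "x = 0" if "x \<in> K1" "Fmu A B b lam x = 0" for x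
    using eq_zero[OF sm that(2)] K1D that(1) by blast
  have contlam: "continuous_on UNIV lam" using sm unfolding smooth_fun_def
    by (metis pderivs.simps(1))
  define K' where "K' = K1 - ball 0 R"
  have K'c: "compact K'" unfolding K'_def using K1c by (simp add: compact_diff)
  have inner: "Fmu A B b (\<lambda>x. lam x + \<delta> x) x = Fmu A B b lam x + \<delta> x *\<^sub>R (B *v x + b)" for \<delta> x
    unfolding Fmu_alt by (simp add: scaleR_add_left)
  have supb: "\<bar>\<delta> x\<bar> \<le> (SUP x\<in>K1. \<bar>\<delta> x\<bar>)" if "smooth_fun \<delta>" "x \<in> K1" for \<delta> x
  proof -
    have "continuous_on K1 (\<lambda>x. \<bar>\<delta> x\<bar>)" using that(1) unfolding smooth_fun_def
      by (metis pderivs.simps(1) continuous_on_rabs continuous_on_subset subset_UNIV)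
    then have "compact ((\<lambda>x. \<bar>\<delta> x\<bar>) ` K1)" using K1c by (rule compact_continuous_image)
    then have "bdd_above ((\<lambda>x. \<bar>\<delta> x\<bar>) ` K1)" by (intro bounded_imp_bdd_above compact_imp_bounded)
    then show ?thesis using that(2) by (intro cSUP_upper)
  qed
  show ?thesis
  proof (cases "K' = {}")
    case True
    show ?thesis
    proof (intro exI[of _ 1] conjI allI impI ballI)
      fix \<delta> x assume d: "smooth_fun \<delta> \<and> (\<forall>x\<in>ball 0 R. \<delta> x = 0) \<and> (SUP x\<in>K1. \<bar>\<delta> x\<bar>) < 1"
        and x: "x \<in> K1" and e: "Fmu A B b (\<lambda>x. lam x + \<delta> x) x = 0"
      have "x \<in> ball 0 R" using True x unfolding K'_def by blast
      then have "\<delta> x = 0" using d by blast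
      then have "Fmu A B b lam x = 0" using e inner[of \<delta> x] by simp
      then show "x = 0" using eq0 x by blast
    qed simp
  next
    case False
    have cF: "continuous_on K' (\<lambda>x. norm (Fmu A B b lam x))"
      unfolding Fmu_alt
      by (intro continuous_intros cont_mv continuous_on_subset[OF contlam]) auto
    obtain xm where xm: "xm \<in> K'" "\<And>y. y \<in> K' \<Longrightarrow> norm (Fmu A B b lam xm) \<le> norm (Fmu A B b lam y)"
      using continuous_attains_inf[OF K'c False cF] by blast
    define m where "m = norm (Fmu A B b lam xm)"
    have "xm \<noteq> 0" using xm(1) R unfolding K'_def by auto
    then have "Fmu A B b lam xm \<noteq> 0" using eq0 xm(1) unfolding K'_def by blast
    then have m0: "m > 0" unfolding m_def by simp
    have cQ: "continuous_on K' (\<lambda>x. B *v x + b)"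
      by (intro continuous_intros cont_mv)
    then have "compact ((\<lambda>x. B *v x + b) ` K')" using K'c by (rule compact_continuous_image)
    then have "bounded ((\<lambda>x. B *v x + b) ` K')" by (rule compact_imp_bounded)
    then obtain Mq where Mq0: "\<forall>y\<in>(\<lambda>x. B *v x + b) ` K'. norm y \<le> Mq" unfolding bounded_iff by blast
    have Mq: "norm (B *v x + b) \<le> Mq" if "x \<in> K'" for x using Mq0 that by blast
    define Mp where "Mp = \<bar>Mq\<bar> + 1"
    have Mp0: "Mp > 0" unfolding Mp_def by simp
    have Mqp: "norm (B *v x + b) \<le> Mp" if "x \<in> K'" for x using Mq[OF that] unfolding Mp_def by simp
    show ?thesis
    proof (intro exI[of _ "m / Mp"] conjI allI impI ballI)
      show "m / Mp > 0" using m0 Mp0 by simp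
      fix \<delta> x assume d: "smooth_fun \<delta> \<and> (\<forall>x\<in>ball 0 R. \<delta> x = 0) \<and> (SUP x\<in>K1. \<bar>\<delta> x\<bar>) < m / Mp"
        and x: "x \<in> K1" and e: "Fmu A B b (\<lambda>x. lam x + \<delta> x) x = 0"
      show "x = 0"
      proof (cases "x \<in> ball 0 R")
        case True
        then have "\<delta> x = 0" using d by blast
        then have "Fmu A B b lam x = 0" using e inner[of \<delta> x] by simp
        then show "x = 0" using eq0 x by blast
      next
        case False
        then have xK: "x \<in> K'" using x unfolding K'_def by blast
        have dl: "\<bar>\<delta> x\<bar> < m / Mp" using supb[of \<delta> x] d x by linarith
        have "Fmu A B b lam x = - (\<delta> x *\<^sub>R (B *v x + b))" using e inner[of \<delta> x]
          by (simp add: eq_neg_iff_add_eq_0)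
        then have "norm (Fmu A B b lam x) = \<bar>\<delta> x\<bar> * norm (B *v x + b)" by simp
        also have "\<dots> \<le> \<bar>\<delta> x\<bar> * Mp" using Mqp[OF xK] by (simp add: mult_left_mono)
        also have "\<dots> < (m / Mp) * Mp" using mult_strict_right_mono[OF dl Mp0] .
        also have "\<dots> = m" using Mp0 by simp
        finally have "norm (Fmu A B b lam x) < m" .
        then show "x = 0" using xm(2)[OF xK] unfolding m_def by simp
      qed
    qed
  qed
qed

end
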